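(* For any $\boldsymbol k=(k_1,k_2)\in[-\pi,\pi]^2$ and $\theta\in[0,2\pi]$, $$\sin^2(2\theta)\sin^2(k_1)\sin^2(k_2)\le\det M(\boldsymbol k,\theta)\le 16\sin^2(2\theta).$$ In particular $F(\theta)$ is finite whenever $\sin(2\theta)\ne0$. The function $\theta\mapsto F(\theta)$ is periodic with period $\pi/2$, symmetric (i.e. $F(\theta)=F(\pi/2-\theta)$) and continuous on $(0,\pi/2)$, increasing on $(0,\pi/4)$ and decreasing on $(\pi/4,\pi/2)$. Its infimum is $-\infty$, attained exactly at $\theta\in\{0,\pi/2,\pi,3\pi/2\}$.
   Context: Fix $\beta,J>0$. For $\boldsymbol k=(k_1,k_2)\in[-\pi,\pi]^2$ and $\theta\in\mathbb R$ set $a_\pm=1\pm e^{-ik_1}$, $b_\pm=1\pm e^{-ik_2}$, $\rho=-\cos(2\theta)$ and let $M(\boldsymbol k,\theta)$ be $\frac12$ times the $4\times4$ matrix with rows $(|a_-|^2+|b_-|^2,\ \rho a_-a_+^*,\ \rho b_-b_+^*,\ 0)$, $(\rho a_-^*a_+,\ |a_+|^2+|b_-|^2,\ 0,\ \rho b_-b_+^* )$, $(\rho b_-^*b_+,\ 0,\ |a_-|^2+|b_+|^2,\ \rho a_-a_+^* )$, $(0,\ \rho b_-^*b_+,\ \rho a_-^*a_+,\ |a_+|^2+|b_+|^2)$. Define $F(\theta)=\frac12\log(\beta J)+\frac18\int_{[-\pi,\pi]^2}\frac{d\boldsymbol k}{(2\pi)^2}\log\det M(\boldsymbol k,\theta)$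 (with value $-\infty$ allowed). *)

theory Defs
  imports "HOL-Analysis.Analysis"
begin

definition Mmat :: "real \<times> real \<Rightarrow> real \<Rightarrow> complex^4^4" where
  "Mmat k \<theta> =
    (let k1 = fst k; k2 = snd k;
         am = 1 - cis (- k1); ap = 1 + cis (- k1);
         bm = 1 - cis (- k2); bp = 1 + cis (- k2);
         \<rho> = complex_of_real (- cos (2 * \<theta>));
         sq = (\<lambda>z. complex_of_real ((cmod z)^2));
         R :: complex^4^4 = vector [
           vector [sq am + sq bm, \<rho> * am * cnj ap, \<rho> * bm * cnj bp, 0],
           vector [\<rho> * cnj am * ap, sq ap + sq bm, 0, \<rho> * bm * cnj bp],
           vector [\<rho> * cnj bm * bp, 0, sq am + sq bp, \<rho> * am * cnj ap],
           vector [0, \<rho> * cnj bm * bp, \<rho> * cnj am * ap, sq ap + sq bp]]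
     in (\<chi> i j. R $ i $ j / 2))"

text \<open>log det M as an extended real; det M is real (M Hermitian) and nonnegative,
  a vanishing determinant gives log = -infinity.\<close>
definition logdetM :: "real \<times> real \<Rightarrow> real \<Rightarrow> ereal" where
  "logdetM k \<theta> = (if Re (det (Mmat k \<theta>)) > 0 then ereal (ln (Re (det (Mmat k \<theta>)))) else - \<infinity>)"

definition ext_set_integral :: "(real \<times> real) set \<Rightarrow> (real \<times> real \<Rightarrow> ereal) \<Rightarrow> ereal" where
  "ext_set_integral S f =
     enn2ereal (\<integral>\<^sup>+ x. e2ennreal (max 0 (f x)) * indicator S x \<partial>lborel)
   - enn2ereal (\<integral>\<^sup>+ x. e2ennreal (max 0 (- f x)) * indicator S x \<partial>lborel)"

definition Ffree :: "real \<Rightarrow> real \<Rightarrow> real \<Rightarrow> ereal" where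
  "Ffree \<beta> J \<theta> = ereal (ln (\<beta> * J) / 2)
     + ereal (1/8) * (ext_set_integral ({-pi..pi} \<times> {-pi..pi}) (\<lambda>k. logdetM k \<theta>) / ereal ((2*pi)^2))"

end

theory Submission
  imports Defs
begin

lemma vector_4 [simp]:
 "(vector [x,y,z,w] ::('a::zero)^4)$1 = x"
 "(vector [x,y,z,w] ::('a::zero)^4)$2 = y"
 "(vector [x,y,z,w] ::('a::zero)^4)$3 = z"
 "(vector [x,y,z,w] ::('a::zero)^4)$4 = w"
  unfolding vector_def by simp_all

lemma sq_m: "complex_of_real ((cmod (1 - cis (- k)))^2) = of_real (2 - 2 * cos k)"
proof -
  have "(cmod (1 - cis (- k)))^2 = (1 - cos k)^2 + (sin k)^2"
    by (simp add: cmod_power2)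
  also have "\<dots> = 2 - 2 * cos k" using sin_cos_squared_add[of k] by (simp add: power2_eq_square algebra_simps)
  finally show ?thesis by simp
qed

lemma sq_p: "complex_of_real ((cmod (1 + cis (- k)))^2) = of_real (2 + 2 * cos k)"
proof -
  have "(cmod (1 + cis (- k)))^2 = (1 + cos k)^2 + (sin k)^2"
    by (simp add: cmod_power2)
  also have "\<dots> = 2 + 2 * cos k" using sin_cos_squared_add[of k] by (simp add: power2_eq_square algebra_simps)
  finally show ?thesis by simp
qed

lemma off1: "(1 - cis (- k)) * cnj (1 + cis (- k)) = \<i> * of_real (2 * sin k)"
  using sin_cos_squared_add[of k]
  by (simp add: complex_eq_iff algebra_simps power2_eq_square)

lemma off2: "cnj (1 - cis (- k)) * (1 + cis (- k)) = - \<i> * of_real (2 * sin k)"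
  using sin_cos_squared_add[of k]
  by (simp add: complex_eq_iff algebra_simps power2_eq_square)

lemma  det_4:
  "det (A::'a::comm_ring_1^4^4) =
   A$1$1*A$2$2*A$3$3*A$4$4 - A$1$1*A$2$2*A$3$4*A$4$3 - A$1$1*A$2$3*A$3$2*A$4$4
 + A$1$1*A$2$3*A$3$4*A$4$2 + A$1$1*A$2$4*A$3$2*A$4$3 - A$1$1*A$2$4*A$3$3*A$4$2
 - A$1$2*A$2$1*A$3$3*A$4$4 + A$1$2*A$2$1*A$3$4*A$4$3 + A$1$2*A$2$3*A$3$1*A$4$4
 - A$1$2*A$2$3*A$3$4*A$4$1 - A$1$2*A$2$4*A$3$1*A$4$3 + A$1$2*A$2$4*A$3$3*A$4$1
 + A$1$3*A$2$1*A$3$2*A$4$4 - A$1$3*A$2$1*A$3$4*A$4$2 - A$1$3*A$2$2*A$3$1*A$4$4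
 + A$1$3*A$2$2*A$3$4*A$4$1 + A$1$3*A$2$4*A$3$1*A$4$2 - A$1$3*A$2$4*A$3$2*A$4$1
 - A$1$4*A$2$1*A$3$2*A$4$3 + A$1$4*A$2$1*A$3$3*A$4$2 + A$1$4*A$2$2*A$3$1*A$4$3
 - A$1$4*A$2$2*A$3$3*A$4$1 - A$1$4*A$2$3*A$3$1*A$4$2 + A$1$4*A$2$3*A$3$2*A$4$1"
proof -
  have f1: "finite {2::4, 3, 4}" "1 \<notin> {2::4, 3, 4}" by auto
  have f2: "finite {3::4, 4}" "2 \<notin> {3::4, 4}" by auto
  have f3: "finite {4::4}" "3 \<notin> {4::4}" by auto
  show ?thesis
    unfolding det_def UNIV_4
    unfolding sum_over_permutations_insert[OF f1]
    unfolding sum_over_permutations_insert[OF f2]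
    unfolding sum_over_permutations_insert[OF f3]
    unfolding permutes_sing
    by (simp add: sign_swap_id permutation_swap_id permutation_compose sign_compose sign_id swap_id_eq algebra_simps)
qed

lemma Mmat_entries:
  fixes k1 k2 \<theta> :: real
  defines "r \<equiv> - cos (2*\<theta>)"
  shows
  "Mmat (k1,k2) \<theta> $1$1 = of_real (2 - cos k1 - cos k2)"
  "Mmat (k1,k2) \<theta> $2$2 = of_real (2 + cos k1 - cos k2)"
  "Mmat (k1,k2) \<theta> $3$3 = of_real (2 - cos k1 + cos k2)"
  "Mmat (k1,k2) \<theta> $4$4 = of_real (2 + cos k1 + cos k2)"
  "Mmat (k1,k2) \<theta> $1$4 = 0" "Mmat (k1,k2) \<theta> $2$3 = 0"
  "Mmat (k1,k2) \<theta> $3$2 = 0" "Mmat (k1,k2) \<theta> $4$1 = 0"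
  "Mmat (k1,k2) \<theta> $1$2 = \<i> * of_real (r * sin k1)"
  "Mmat (k1,k2) \<theta> $3$4 = \<i> * of_real (r * sin k1)"
  "Mmat (k1,k2) \<theta> $2$1 = - \<i> * of_real (r * sin k1)"
  "Mmat (k1,k2) \<theta> $4$3 = - \<i> * of_real (r * sin k1)"
  "Mmat (k1,k2) \<theta> $1$3 = \<i> * of_real (r * sin k2)"
  "Mmat (k1,k2) \<theta> $2$4 = \<i> * of_real (r * sin k2)"
  "Mmat (k1,k2) \<theta> $3$1 = - \<i> * of_real (r * sin k2)"
  "Mmat (k1,k2) \<theta> $4$2 = - \<i> * of_real (r * sin k2)"
  unfolding Mmat_def Let_def fst_conv snd_conv sq_m sq_p mult.assoc off1 off2 vec_lambda_beta vector_4 r_def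
  by (simp_all add: field_simps)

lemma Mmat_det:
  fixes k1 k2 \<theta> :: real
  shows "det (Mmat (k1,k2) \<theta>) = of_real ((sin(2*\<theta>))^2 * (8*((sin k1)^2+(sin k2)^2) + (sin(2*\<theta>))^2*((sin k1)^2-(sin k2)^2)^2))"
proof -
  define r where "r = - cos (2*\<theta>)"
  define c1 where "c1 = cos k1"
  define c2 where "c2 = cos k2"
  define s1 where "s1 = sin k1"
  define s2 where "s2 = sin k2"
  define S where "S = sin (2*\<theta>)"
  have h1: "c1^2 + s1^2 = 1" "c2^2 + s2^2 = 1" "r^2 + S^2 = 1"
    by (simp_all add: c1_def s1_def c2_def s2_def r_def S_def)
  have "det (Mmat (k1,k2) \<theta>) = of_real ((2 - c1 - c2)*(2 + c1 - c2)*(2 - c1 + c2)*(2 + c1 + c2)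
     - (r * s1)^2 * ((2 - c1 - c2)*(2 + c1 - c2) + (2 - c1 + c2)*(2 + c1 + c2))
     - (r * s2)^2 * ((2 - c1 - c2)*(2 - c1 + c2) + (2 + c1 - c2)*(2 + c1 + c2))
     + ((r * s1)^2 - (r * s2)^2)^2)"
    unfolding det_4 Mmat_entries r_def[symmetric] c1_def[symmetric] c2_def[symmetric]
      s1_def[symmetric] s2_def[symmetric]
    by (simp add: complex_eq_iff power2_eq_square algebra_simps)
  also have "\<dots> = of_real (S^2 * (8*(s1^2+s2^2) + S^2*(s1^2-s2^2)^2))"
    using h1 by (simp only: of_real_eq_iff) algebra
  finally show ?thesis by (simp add: S_def s1_def s2_def)
qed

lemma sin_ge_half_x: fixes y :: real assumes "0 \<le> y" "y \<le> 1" shows "y/2 \<le> sin y"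
proof -
  have "(\<lambda>t. sin t - t/2) 0 \<le> (\<lambda>t. sin t - t/2) y"
  proof (rule DERIV_nonneg_imp_nondecreasing[OF assms(1)])
    fix t :: real assume t: "0 \<le> t" "t \<le> y"
    have "cos t = 1 - 2 * (sin (t/2))^2" using cos_double_sin[of "t/2"] by simp
    moreover have "(sin (t/2))^2 \<le> (t/2)^2"
      using abs_sin_x_le_abs_x[of "t/2"] by (metis abs_le_square_iff abs_of_nonneg t(1) zero_le_divide_iff zero_le_numeral abs_abs)
    moreover have "t^2 \<le> 1" using t assms by (intro power_le_one) auto
    hence "(t/2)^2 \<le> 1/4" by (simp add: power_divide)
    ultimately have "cos t - 1/2 \<ge> 0" by linarith
    moreover have "DERIV (\<lambda>t. sin t - t/2) t :> cos t - 1/2"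
      by (auto intro!: derivative_eq_intros)
    ultimately show "\<exists>d. DERIV (\<lambda>t. sin t - t/2) t :> d \<and> d \<ge> 0" by blast
  qed
  then show ?thesis by simp
qed

lemma sin_ge_half: fixes y :: real assumes "1 \<le> y" "y \<le> pi - 1" shows "1/2 \<le> sin y"
proof -
  have s1: "1/2 \<le> sin (1::real)" using sin_ge_half_x[of 1] by simp
  show ?thesis
  proof (cases "y \<le> pi/2")
    case True
    have "sin 1 \<le> sin y" using assms True pi_gt3 by (intro sin_monotone_2pi_le) auto
    then show ?thesis using s1 by simp
  next
    case False
    have "sin 1 \<le> sin (pi - y)" using assms False pi_gt3 by (intro sin_monotone_2pi_le) auto
    then show ?thesis using s1 by simp
  qed
qed

lemma ln4: "ln (4::real) = 2 * ln 2"
proof -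
  have "ln ((2::real)^2) = real 2 * ln 2" by (rule ln_realpow)
  then show ?thesis by simp
qed

definition phi :: "real \<Rightarrow> real" where
  "phi x = indicator {0..pi} x * x powr (-1/2)"

lemma phi_nonneg: "0 \<le> phi x"
  by (simp add: phi_def indicator_def)

lemma phi_eq: "0 \<le> x \<Longrightarrow> x \<le> pi \<Longrightarrow> phi x = x powr (-1/2)"
  by (simp add: phi_def)

lemma ln_sin_key:
  fixes t x :: real
  assumes t: "0 < t" and st: "t/2 \<le> \<bar>sin x\<bar>"
  shows "\<bar>ln ((sin x)^2)\<bar> \<le> 2 * ln 2 + 4 * t powr (-1/2)"
proof -
  have "sin x \<noteq> 0" using t st by auto
  hence pos: "0 < (sin x)^2" by simp
  have le1: "(sin x)^2 \<le> 1" by (simp add: abs_square_le_1)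
  have "ln ((sin x)^2) \<le> 0" using pos le1 by simp
  hence a: "\<bar>ln ((sin x)^2)\<bar> = - ln ((sin x)^2)" by simp
  have "(t/2)^2 \<le> (sin x)^2" using st t by (metis abs_le_square_iff abs_of_pos half_gt_zero)
  hence "ln ((t/2)^2) \<le> ln ((sin x)^2)" using t by (intro ln_le_cancel_iff[THEN iffD2]) auto
  moreover have "ln ((t/2)^2) = 2 * ln t - 2 * ln 2" using t ln_realpow[of t 2] by (simp add: ln_div power_divide ln4)
  moreover have "- ln t \<le> 2 * t powr (-1/2)"
  proof -
    have "ln (t powr (-1/2)) \<le> t powr (-1/2) - 1" using t by (intro ln_le_minus_one) simp
    moreover have "ln (t powr (-1/2)) = - ln t / 2" using t by (simp add: ln_powr)
    ultimately show ?thesis by simp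
  qed
  ultimately show ?thesis using a by linarith
qed

lemma ln_sin_key2:
  fixes x :: real
  assumes st: "1/2 \<le> \<bar>sin x\<bar>"
  shows "\<bar>ln ((sin x)^2)\<bar> \<le> 2 * ln 2"
proof -
  have le1: "(sin x)^2 \<le> 1" by (simp add: abs_square_le_1)
  have "(1/2)^2 \<le> (sin x)^2" using st by (metis abs_le_square_iff abs_of_pos half_gt_zero zero_less_one)
  hence pos: "0 < (sin x)^2" "1/4 \<le> (sin x)^2" by (auto simp: power2_eq_square)
  have "ln ((sin x)^2) \<le> 0" using pos le1 by simp
  moreover have "ln (1/4) \<le> ln ((sin x)^2)" using pos by simp
  moreover have "ln (1/4::real) = - 2 * ln 2"
    by (simp add: ln_div ln4)
  ultimately show ?thesis by linarith
qed

lemma ln_sin_bound: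
  fixes x :: real
  assumes x: "-pi \<le> x" "x \<le> pi"
  shows "\<bar>ln ((sin x)^2)\<bar> \<le> 2 * ln 2 + 4 * phi x + 4 * phi (-x) + 4 * phi (pi - x) + 4 * phi (pi + x)"
proof -
  have p: "0 \<le> phi x" "0 \<le> phi (-x)" "0 \<le> phi (pi - x)" "0 \<le> phi (pi + x)" by (simp_all add: phi_nonneg)
  have l2: "0 \<le> ln (2::real)" by simp
  consider "x = 0 \<or> x = pi \<or> x = -pi" | "0 < x \<and> x \<le> 1" | "-1 \<le> x \<and> x < 0"
    | "1 \<le> \<bar>x\<bar> \<and> \<bar>x\<bar> \<le> pi - 1" | "pi - 1 < x \<and> x < pi" | "-pi < x \<and> x < -(pi - 1)"
    using x by linarith
  then show ?thesis
  proof cases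
    case 1 then show ?thesis using p l2 by auto
  next
    case 2
    have "x/2 \<le> \<bar>sin x\<bar>" using sin_ge_half_x[of x] 2 by simp
    from ln_sin_key[OF _ this] 2 have "\<bar>ln ((sin x)^2)\<bar> \<le> 2 * ln 2 + 4 * phi x"
      using pi_gt3 by (simp add: phi_eq)
    then show ?thesis using p by linarith
  next
    case 3
    have "(-x)/2 \<le> \<bar>sin x\<bar>" using sin_ge_half_x[of "-x"] 3 by simp
    from ln_sin_key[OF _ this] 3 have "\<bar>ln ((sin x)^2)\<bar> \<le> 2 * ln 2 + 4 * phi (-x)"
      using pi_gt3 by (simp add: phi_eq)
    then show ?thesis using p by linarith
  next
    case 4
    have "1/2 \<le> sin \<bar>x\<bar>" using sin_ge_half 4 by blast
    hence "1/2 \<le> \<bar>sin x\<bar>" by (cases "x \<ge> 0") auto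
    from ln_sin_key2[OF this] show ?thesis using p by linarith
  next
    case 5
    have "(pi - x)/2 \<le> \<bar>sin x\<bar>" using sin_ge_half_x[of "pi - x"] 5 by simp
    from ln_sin_key[OF _ this] 5 have "\<bar>ln ((sin x)^2)\<bar> \<le> 2 * ln 2 + 4 * phi (pi - x)"
      using pi_gt3 by (simp add: phi_eq)
    then show ?thesis using p by linarith
  next
    case 6
    have "sin (pi + x) = - sin x" by (metis add.commute sin_periodic_pi)
    hence "(pi + x)/2 \<le> \<bar>sin x\<bar>" using sin_ge_half_x[of "pi + x"] 6 by simp
    from ln_sin_key[OF _ this] 6 have "\<bar>ln ((sin x)^2)\<bar> \<le> 2 * ln 2 + 4 * phi (pi + x)"
      using pi_gt3 by (simp add: phi_eq)
    then show ?thesis using p by linarith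
  qed
qed

lemma phi_integrable: "integrable lborel phi"
proof -
  have "(\<lambda>x::real. x powr (-1/2)) integrable_on {0..pi}" by (rule integrable_on_powr_from_0) auto
  hence "(\<lambda>x::real. x powr (-1/2)) absolutely_integrable_on {0..pi}"
    by (rule nonnegative_absolutely_integrable_1) auto
  hence "integrable lebesgue (\<lambda>x. indicator {0..pi} x *\<^sub>R (x::real) powr (-1/2))"
    by (simp add: set_integrable_def)
  hence "integrable lborel (\<lambda>x. indicator {0..pi} x *\<^sub>R (x::real) powr (-1/2))"
    by (subst (asm) integrable_completion) auto
  then show ?thesis by (simp add: phi_def[abs_def])
qed

lemma phi_integrable_affine: "integrable lborel (\<lambda>x. phi (t + c * x))" if "c \<noteq> 0"
  using lborel_integrable_real_affine_iff[OF that, of phi t] phi_integrable by simp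

lemma phi_measurable[measurable]: "phi \<in> borel_measurable borel"
  unfolding phi_def by measurable

lemma ell_integrable_1: "integrable lborel (\<lambda>x. indicator {-pi..pi} x * \<bar>ln ((sin x)^2)\<bar>)"
proof (rule Bochner_Integration.integrable_bound)
  let ?B = "\<lambda>x. indicator {-pi..pi} x * (2 * ln 2) + 4 * phi x + 4 * phi (-x) + 4 * phi (pi - x) + 4 * phi (pi + x)"
  show "integrable lborel ?B"
    using phi_integrable_affine[of "-1" 0] phi_integrable_affine[of "-1" pi] phi_integrable_affine[of 1 pi]
    by (intro Bochner_Integration.integrable_add integrable_mult_right phi_integrable) auto
  show "(\<lambda>x. indicator {-pi..pi} x * \<bar>ln ((sin x)^2)\<bar>) \<in> borel_measurable lborel"
    by measurable
  show "AE x in lborel. norm (indicator {-pi..pi} x * \<bar>ln ((sin x)^2)\<bar>) \<le> norm (?B x)"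
  proof (rule AE_I2)
    fix x :: real
    have p: "0 \<le> phi x" "0 \<le> phi (-x)" "0 \<le> phi (pi - x)" "0 \<le> phi (pi + x)" by (simp_all add: phi_nonneg)
    have l2: "0 \<le> ln (2::real)" by simp
    show "norm (indicator {-pi..pi} x * \<bar>ln ((sin x)^2)\<bar>) \<le> norm (?B x)"
    proof (cases "x \<in> {-pi..pi}")
      case True
      then show ?thesis using ln_sin_bound[of x] p l2 by (simp add: indicator_def)
    next
      case False
      then show ?thesis using p l2 by (auto simp: indicator_def)
    qed
  qed
qed

lemma pair_integrable:
  fixes f :: "real \<Rightarrow> real"
  assumes f: "integrable lborel f" and fm[measurable]: "f \<in> borel_measurable borel"
  shows "integrable (lborel :: (real \<times> real) measure) (\<lambda>k. f (fst k) * indicator {-pi..pi} (snd k))"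
proof -
  have "integrable (lborel \<Otimes>\<^sub>M lborel) (\<lambda>k. f (fst k) * indicator {-pi..pi} (snd k))"
  proof (rule lborel_pair.Fubini_integrable)
    show "(\<lambda>k. f (fst k) * indicator {-pi..pi} (snd k)) \<in> borel_measurable (lborel \<Otimes>\<^sub>M lborel)"
      by measurable
    have "(\<lambda>x. \<integral> y. norm (f (fst (x, y)) * indicator {-pi..pi} (snd (x, y))) \<partial>lborel) = (\<lambda>x. norm (f x) * (2*pi))"
      by (auto simp: abs_mult)
    then show "integrable lborel (\<lambda>x. \<integral> y. norm (f (fst (x, y)) * indicator {-pi..pi} (snd (x, y))) \<partial>lborel)"
      using f by (simp add: integrable_mult_left)
    show "AE x in lborel. integrable lborel (\<lambda>y. f (fst (x, y)) * indicator {-pi..pi} (snd (x, y)))"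
      by (auto intro!: integrable_mult_right)
  qed
  then show ?thesis by (simp add: lborel_prod)
qed

lemma aux_pos: "e2ennreal (max 0 (ereal y)) = ennreal y"
proof (cases "y \<ge> 0")
  case True
  then have "max 0 (ereal y) = ereal y" by (simp add: max_def)
  then show ?thesis by simp
next
  case False
  then have "max 0 (ereal y) = 0" by (simp add: max_def)
  then show ?thesis using False by (simp add: ennreal_neg e2ennreal_neg)
qed

lemma aux_neg: "e2ennreal (max 0 (- ereal y)) = ennreal (- y)"
  using aux_pos[of "-y"] by simp

lemma ext_int_eq:
  fixes h :: "real \<times> real \<Rightarrow> real"
  assumes int: "integrable lborel (\<lambda>k. indicator S k * h k)"
    and ae: "AE k in lborel. k \<in> S \<longrightarrow> F k = ereal (h k)"
  shows "ext_set_integral S F = ereal (\<integral> k. indicator S k * h k \<partial>lborel)"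
proof -
  obtain r q where rq: "0 \<le> r" "0 \<le> q"
    "(\<integral>\<^sup>+x. ennreal (indicator S x * h x) \<partial>lborel) = ennreal r"
    "(\<integral>\<^sup>+x. ennreal (- (indicator S x * h x)) \<partial>lborel) = ennreal q"
    "(\<integral> k. indicator S k * h k \<partial>lborel) = r - q"
    by (rule integrableE[OF int]) blast
  have 1: "(\<integral>\<^sup>+ x. e2ennreal (max 0 (F x)) * indicator S x \<partial>lborel) = ennreal r"
    unfolding rq(3)[symmetric]
  proof (rule nn_integral_cong_AE)
    show "AE x in lborel. e2ennreal (max 0 (F x)) * indicator S x = ennreal (indicator S x * h x)"
      using ae
    proof eventually_elim
      case (elim x)
      show ?case
      proof (cases "x \<in> S")
        case True
        then show ?thesis using elim by (simp add: aux_pos)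
      qed simp
    qed
  qed
  have 2: "(\<integral>\<^sup>+ x. e2ennreal (max 0 (- F x)) * indicator S x \<partial>lborel) = ennreal q"
    unfolding rq(4)[symmetric]
  proof (rule nn_integral_cong_AE)
    show "AE x in lborel. e2ennreal (max 0 (- F x)) * indicator S x = ennreal (- (indicator S x * h x))"
      using ae
    proof eventually_elim
      case (elim x)
      show ?case
      proof (cases "x \<in> S")
        case True
        then show ?thesis using elim by (simp add: aux_pos)
      qed simp
    qed
  qed
  have "enn2ereal (ennreal r) - enn2ereal (ennreal q) = ereal (r - q)" using rq(1,2) by simp
  then show ?thesis unfolding ext_set_integral_def 1 2 rq(5) .
qed

definition SQ :: "(real \<times> real) set" where "SQ = {-pi..pi} \<times> {-pi..pi}"
definition pp :: "real \<times> real \<Rightarrow> real" where "pp k = (sin (fst k))^2"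
definition qq :: "real \<times> real \<Rightarrow> real" where "qq k = (sin (snd k))^2"
definition gf :: "real \<Rightarrow> real \<times> real \<Rightarrow> real" where
  "gf s k = 8 * pp k + 8 * qq k + s * (pp k - qq k)^2"
definition Phi :: "real \<Rightarrow> real" where
  "Phi s = (\<integral> k. indicator SQ k * ln (gf s k) \<partial>lborel)"

lemma indicator_SQ: "indicator SQ k = indicator {-pi..pi} (fst k) * (indicator {-pi..pi} (snd k) :: real)"
  by (simp add: SQ_def indicator_times)

lemma SQ_borel[measurable]: "SQ \<in> sets borel"
  unfolding SQ_def by (intro borel_closed closed_Times) auto

lemma SQ_sets[measurable]: "SQ \<in> sets lborel"
  by simp

lemma emeasure_SQ: "emeasure lborel SQ = ennreal ((2*pi)^2)"
proof -
  have "emeasure (lborel \<Otimes>\<^sub>M lborel) ({-pi..pi} \<times> {-pi..pi}) = emeasure lborel {-pi..pi::real} * emeasure lborel {-pi..pi::real}"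
    by (rule lborel.emeasure_pair_measure_Times) auto
  also have "\<dots> = ennreal ((2*pi)^2)" by (simp add: ennreal_mult[symmetric] power2_eq_square)
  finally show ?thesis by (simp add: lborel_prod SQ_def)
qed

lemma measure_SQ: "measure lborel SQ = (2*pi)^2"
  by (simp add: measure_def emeasure_SQ)

lemma integrable_const_SQ: "integrable lborel (\<lambda>k. indicator SQ k * (c::real))"
  by (intro integrable_mult_left integrable_real_indicator) (auto simp: emeasure_SQ)

lemma integral_const_SQ: "(\<integral> k. indicator SQ k * (c::real) \<partial>lborel) = c * (2*pi)^2"
  by (simp add: integral_mult_left_zero measure_SQ)

lemma pair_integrable2:
  fixes f :: "real \<Rightarrow> real"
  assumes f: "integrable lborel f" and fm[measurable]: "f \<in> borel_measurable borel"
  shows "integrable (lborel :: (real \<times> real) measure) (\<lambda>k. indicator {-pi..pi} (fst k) * f (snd k))"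
proof -
  have "integrable (lborel \<Otimes>\<^sub>M lborel) (\<lambda>k. indicator {-pi..pi} (fst k) * f (snd k))"
  proof (rule lborel_pair.Fubini_integrable)
    show "(\<lambda>k. indicator {-pi..pi} (fst k) * f (snd k)) \<in> borel_measurable (lborel \<Otimes>\<^sub>M lborel)"
      by measurable
    have "(\<lambda>x. \<integral> y. norm (indicator {-pi..pi} (fst (x, y)) * f (snd (x, y))) \<partial>lborel)
        = (\<lambda>x. indicator {-pi..pi} x * (\<integral> y. norm (f y) \<partial>lborel))"
      by (auto simp: abs_mult indicator_def)
    then show "integrable lborel (\<lambda>x. \<integral> y. norm (indicator {-pi..pi} (fst (x, y)) * f (snd (x, y))) \<partial>lborel)"
      by (simp add: integrable_mult_left)
    show "AE x in lborel. integrable lborel (\<lambda>y. indicator {-pi..pi} (fst (x, y)) * f (snd (x, y)))"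
      using f by (auto intro!: integrable_mult_right)
  qed
  then show ?thesis by (simp add: lborel_prod)
qed

lemma pp_cont: "continuous_on UNIV pp"
  unfolding pp_def[abs_def] by (intro continuous_intros)
lemma qq_cont: "continuous_on UNIV qq"
  unfolding qq_def[abs_def] by (intro continuous_intros)
lemma pp_measurable[measurable]: "pp \<in> borel_measurable borel"
  by (intro borel_measurable_continuous_onI pp_cont)
lemma qq_measurable[measurable]: "qq \<in> borel_measurable borel"
  by (intro borel_measurable_continuous_onI qq_cont)
lemma gf_measurable[measurable]: "gf s \<in> borel_measurable borel"
  unfolding gf_def[abs_def] by (intro borel_measurable_continuous_onI continuous_intros pp_cont qq_cont)

lemma ell_pp: "integrable lborel (\<lambda>k. indicator SQ k * \<bar>ln (pp k)\<bar>)"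
proof -
  have "integrable lborel (\<lambda>k::real\<times>real. (indicator {-pi..pi} (fst k) * \<bar>ln ((sin (fst k))^2)\<bar>) * indicator {-pi..pi} (snd k))"
    by (rule pair_integrable[OF ell_integrable_1]) measurable
  then show ?thesis by (simp add: indicator_SQ pp_def mult_ac)
qed

lemma ell_qq: "integrable lborel (\<lambda>k. indicator SQ k * \<bar>ln (qq k)\<bar>)"
proof -
  have "integrable lborel (\<lambda>k::real\<times>real. indicator {-pi..pi} (fst k) * (indicator {-pi..pi} (snd k) * \<bar>ln ((sin (snd k))^2)\<bar>))"
    by (rule pair_integrable2[OF ell_integrable_1]) measurable
  then show ?thesis by (simp add: indicator_SQ qq_def mult_ac)
qed

lemma sin_sq_le1: "(sin x)^2 \<le> (1::real)"
  using sin_cos_squared_add[of x] by (smt (verit) zero_le_power2)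

lemma pp_range: "0 \<le> pp k" "pp k \<le> 1" by (simp_all add: pp_def sin_sq_le1)
lemma qq_range: "0 \<le> qq k" "qq k \<le> 1" by (simp_all add: qq_def sin_sq_le1)

lemma gf_le: assumes "0 \<le> s" "s \<le> 1" shows "gf s k \<le> 17"
proof -
  have "(pp k - qq k)^2 \<le> 1" using pp_range[of k] qq_range[of k]
    by (simp add: abs_square_le_1)
  hence "s * (pp k - qq k)^2 \<le> 1" using assms by (simp add: mult_le_one)
  then show ?thesis unfolding gf_def using pp_range[of k] qq_range[of k] by linarith
qed

lemma gf_ge: assumes "0 \<le> s" shows "8 * pp k + 8 * qq k \<le> gf s k"
  unfolding gf_def using assms by simp

lemma gf_bound:
  assumes "0 \<le> s" "s \<le> 1"
  shows "\<bar>ln (gf s k)\<bar> \<le> 16 + \<bar>ln (pp k)\<bar> + \<bar>ln (qq k)\<bar>"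
proof (cases "gf s k = 0")
  case True then show ?thesis by simp
next
  case False
  have g0: "0 < gf s k" using False gf_ge[OF assms(1), of k] pp_range[of k] qq_range[of k] by linarith
  have up: "ln (gf s k) \<le> 16" using ln_le_minus_one[OF g0] gf_le[OF assms, of k] by linarith
  have low: "- \<bar>ln (pp k)\<bar> - \<bar>ln (qq k)\<bar> \<le> ln (gf s k)"
  proof (cases "pp k = 0")
    case True
    have "qq k \<noteq> 0"
    proof
      assume "qq k = 0"
      with True False show False by (simp add: gf_def)
    qed
    then have "0 < qq k" using qq_range[of k] by simp
    moreover have "qq k \<le> gf s k" using gf_ge[OF assms(1), of k] pp_range[of k] qq_range[of k] by linarith
    ultimately have "ln (qq k) \<le> ln (gf s k)" by simp
    then show ?thesis by linarith
  next
    case F: False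
    then have "0 < pp k" using pp_range[of k] by simp
    moreover have "pp k \<le> gf s k" using gf_ge[OF assms(1), of k] pp_range[of k] qq_range[of k] by linarith
    ultimately have "ln (pp k) \<le> ln (gf s k)" by simp
    then show ?thesis by linarith
  qed
  show ?thesis using up low by linarith
qed

lemma Phi_integrable:
  assumes "0 \<le> s" "s \<le> 1"
  shows "integrable lborel (\<lambda>k. indicator SQ k * ln (gf s k))"
proof (rule Bochner_Integration.integrable_bound)
  show "integrable lborel (\<lambda>k. indicator SQ k * 16 + indicator SQ k * \<bar>ln (pp k)\<bar> + indicator SQ k * \<bar>ln (qq k)\<bar>)"
    by (intro Bochner_Integration.integrable_add integrable_const_SQ ell_pp ell_qq)
  show "(\<lambda>k. indicator SQ k * ln (gf s k)) \<in> borel_measurable lborel" by measurable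
  show "AE k in lborel. norm (indicator SQ k * ln (gf s k)) \<le> norm (indicator SQ k * 16 + indicator SQ k * \<bar>ln (pp k)\<bar> + indicator SQ k * \<bar>ln (qq k)\<bar>)"
    using gf_bound[OF assms] by (auto simp: indicator_def)
qed

lemma lngf_diff:
  assumes "0 \<le> s" "s \<le> s'"
  shows "0 \<le> ln (gf s' k) - ln (gf s k)" "ln (gf s' k) - ln (gf s k) \<le> (s' - s) / 4"
proof -
  have le: "gf s k \<le> gf s' k" unfolding gf_def using assms by (simp add: mult_right_mono)
  have "0 \<le> ln (gf s' k) - ln (gf s k) \<and> ln (gf s' k) - ln (gf s k) \<le> (s' - s) / 4"
  proof (cases "pp k + qq k = 0")
    case True
    then have "pp k = 0" "qq k = 0" using pp_range[of k] qq_range[of k] by linarith+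
    then show ?thesis using assms by (simp add: gf_def)
  next
    case False
    then have pq: "0 < pp k + qq k" using pp_range[of k] qq_range[of k] by linarith
    have g0: "0 < gf s k" using gf_ge[OF assms(1), of k] pq by linarith
    have "ln (gf s' k) - ln (gf s k) = ln (gf s' k / gf s k)" using g0 le by (simp add: ln_div)
    also have "\<dots> \<le> gf s' k / gf s k - 1" using g0 le by (intro ln_le_minus_one) simp
    also have "\<dots> = (s' - s) * (pp k - qq k)^2 / gf s k" using g0 by (simp add: field_simps gf_def)
    also have "\<dots> \<le> (s' - s) / 4"
    proof -
      have "(pp k - qq k)^2 \<le> (pp k + qq k)^2" using pp_range[of k] qq_range[of k]
        by (simp add: power2_eq_square algebra_simps)
      also have "\<dots> \<le> 2 * pp k + 2 * qq k"
      proof -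
        have "(pp k + qq k) * (pp k + qq k) \<le> 2 * (pp k + qq k)"
          using pp_range[of k] qq_range[of k] by (intro mult_right_mono) auto
        then show ?thesis by (simp add: power2_eq_square)
      qed
      also have "\<dots> \<le> gf s k / 4" using gf_ge[OF assms(1), of k] by linarith
      finally have "(pp k - qq k)^2 \<le> gf s k / 4" .
      hence X: "(s' - s) * (pp k - qq k)^2 \<le> (s' - s) * (gf s k / 4)" using assms by (intro mult_left_mono) auto
      have "(s' - s) * (pp k - qq k)^2 / gf s k \<le> (s' - s) * (gf s k / 4) / gf s k"
        by (intro divide_right_mono X) (use g0 in auto)
      also have "\<dots> = (s' - s) / 4" using g0 by simp
      finally show ?thesis .
    qed
    finally show ?thesis using g0 le by simp
  qed
  then show "0 \<le> ln (gf s' k) - ln (gf s k)" "ln (gf s' k) - ln (gf s k) \<le> (s' - s) / 4" by auto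
qed

lemma Phi_mono_lip:
  assumes "0 \<le> s" "s \<le> s'" "s' \<le> 1"
  shows "Phi s \<le> Phi s'" "Phi s' \<le> Phi s + pi^2 * (s' - s)"
proof -
  have i1: "integrable lborel (\<lambda>k. indicator SQ k * ln (gf s k))" using assms by (intro Phi_integrable) auto
  have i2: "integrable lborel (\<lambda>k. indicator SQ k * ln (gf s' k))" using assms by (intro Phi_integrable) auto
  show "Phi s \<le> Phi s'" unfolding Phi_def
    using i1 i2 lngf_diff(1)[OF assms(1,2)]
    by (intro integral_mono) (auto simp: indicator_def)
  have "Phi s' \<le> (\<integral> k. indicator SQ k * ln (gf s k) + indicator SQ k * ((s' - s)/4) \<partial>lborel)"
    unfolding Phi_def
  proof (intro integral_mono Bochner_Integration.integrable_add integrable_const_SQ i1 i2)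
    fix k :: "real \<times> real"
    show "indicator SQ k * ln (gf s' k) \<le> indicator SQ k * ln (gf s k) + indicator SQ k * ((s' - s) / 4)"
    proof -
      have "ln (gf s' k) \<le> ln (gf s k) + (s' - s) / 4" using lngf_diff(2)[OF assms(1,2), of k] by linarith
      then show ?thesis by (cases "k \<in> SQ") auto
    qed
  qed
  also have "\<dots> = Phi s + (s' - s) / 4 * (2*pi)^2"
    by (simp only: Bochner_Integration.integral_add[OF i1 integrable_const_SQ] integral_const_SQ Phi_def)
  also have "\<dots> = Phi s + pi^2 * (s' - s)"
    by (simp add: power2_eq_square field_simps)
  finally show "Phi s' \<le> Phi s + pi^2 * (s' - s)" .
qed

lemma det_gf: "det (Mmat k \<theta>) = of_real ((sin (2*\<theta>))^2 * gf ((sin (2*\<theta>))^2) k)"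
proof -
  obtain k1 k2 where k: "k = (k1, k2)" by (cases k)
  show ?thesis unfolding k Mmat_det by (simp add: gf_def pp_def qq_def algebra_simps)
qed

lemma AE_sin_fst: "AE k in (lborel :: (real \<times> real) measure). sin (fst k) \<noteq> 0"
proof -
  have c: "countable (range (\<lambda>i::int. real_of_int i * pi))" by simp
  have ae1: "AE x in lborel. sin x \<noteq> (0::real)"
  proof (rule AE_I'[OF countable_imp_null_set_lborel[OF c]])
    show "{x \<in> space lborel. \<not> sin x \<noteq> 0} \<subseteq> range (\<lambda>i::int. real_of_int i * pi)"
      by (auto simp: sin_zero_iff_int2)
  qed
  have "AE k in lborel \<Otimes>\<^sub>M lborel. sin (fst k) \<noteq> (0::real)"
  proof (rule lborel_pair.AE_pair_measure)
    show "{x \<in> space (lborel \<Otimes>\<^sub>M lborel). sin (fst x) \<noteq> (0::real)} \<in> sets (lborel \<Otimes>\<^sub>M lborel)"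
      by measurable
    show "AE x in lborel. AE y in lborel. sin (fst (x, y)) \<noteq> (0::real)"
      using ae1 by eventually_elim simp
  qed
  then show ?thesis unfolding lborel_prod .
qed

lemma G_pos:
  assumes S: "S = (sin (2*\<theta>))^2" and S0: "0 < S"
  shows "ext_set_integral SQ (\<lambda>k. logdetM k \<theta>) = ereal (ln S * (2*pi)^2 + Phi S)"
proof -
  have S1: "S \<le> 1" unfolding S by (rule sin_sq_le1)
  have i1: "integrable lborel (\<lambda>k. indicator SQ k * ln (gf S k))" using S0 S1 by (intro Phi_integrable) auto
  have eq: "(\<lambda>k. indicator SQ k * (ln S + ln (gf S k))) = (\<lambda>k. indicator SQ k * ln S + indicator SQ k * ln (gf S k))"
    by (simp add: distrib_left)
  have int: "integrable lborel (\<lambda>k. indicator SQ k * (ln S + ln (gf S k)))"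
    unfolding eq by (intro Bochner_Integration.integrable_add integrable_const_SQ i1)
  have ae: "AE k in lborel. k \<in> SQ \<longrightarrow> logdetM k \<theta> = ereal (ln S + ln (gf S k))"
    using AE_sin_fst
  proof eventually_elim
    case (elim k)
    have "0 < pp k" using elim by (simp add: pp_def)
    hence g: "0 < gf S k" using gf_ge[of S k] S0 qq_range[of k] by linarith
    hence "0 < S * gf S k" using S0 by simp
    then show ?case using g S0 by (simp add: logdetM_def det_gf S[symmetric] ln_mult)
  qed
  have "ext_set_integral SQ (\<lambda>k. logdetM k \<theta>) = ereal (\<integral> k. indicator SQ k * (ln S + ln (gf S k)) \<partial>lborel)"
    by (rule ext_int_eq[OF int ae])
  also have "(\<integral> k. indicator SQ k * (ln S + ln (gf S k)) \<partial>lborel) = ln S * (2*pi)^2 + Phi S"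
    unfolding eq Bochner_Integration.integral_add[OF integrable_const_SQ i1] integral_const_SQ Phi_def ..
  finally show ?thesis .
qed

lemma G_zero:
  assumes "sin (2*\<theta>) = 0"
  shows "ext_set_integral SQ (\<lambda>k. logdetM k \<theta>) = - \<infinity>"
proof -
  have L: "logdetM k \<theta> = - \<infinity>" for k using assms by (simp add: logdetM_def det_gf)
  have 1: "(\<integral>\<^sup>+ x. e2ennreal (max 0 (logdetM x \<theta>)) * indicator SQ x \<partial>lborel) = 0"
    by (simp add: L e2ennreal_neg)
  have "(\<integral>\<^sup>+ x. e2ennreal (max 0 (- logdetM x \<theta>)) * indicator SQ x \<partial>lborel) = (\<integral>\<^sup>+ x. top * indicator SQ x \<partial>lborel)"
    by (simp add: L)
  also have "\<dots> = top * emeasure lborel SQ" by (rule nn_integral_cmult_indicator) simp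
  also have "\<dots> = top" by (simp add: emeasure_SQ ennreal_top_mult)
  finally show ?thesis unfolding ext_set_integral_def 1 by (simp add: zero_ennreal.rep_eq)
qed

definition Fr :: "real \<Rightarrow> real \<Rightarrow> real \<Rightarrow> real" where
  "Fr \<beta> J s = ln (\<beta> * J) / 2 + 1/8 * ((ln s * (2*pi)^2 + Phi s) / (2*pi)^2)"

lemma Ffree_eq:
  "Ffree \<beta> J \<theta> = (if sin (2*\<theta>) = 0 then - \<infinity> else ereal (Fr \<beta> J ((sin (2*\<theta>))^2)))"
proof (cases "sin (2*\<theta>) = 0")
  case True
  then show ?thesis unfolding Ffree_def G_zero[OF True] SQ_def[symmetric]
    by (simp add: divide_ereal_def)
next
  case False
  then have "0 < (sin (2*\<theta>))^2" by simp
  from G_pos[OF refl this] False show ?thesis unfolding Ffree_def SQ_def[symmetric]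
    by (simp add: Fr_def)
qed

lemma gf_le16: assumes "0 \<le> s" "s \<le> 1" shows "gf s k \<le> 16"
proof -
  have a: "\<bar>pp k - qq k\<bar> \<le> 1" using pp_range[of k] qq_range[of k] by linarith
  have "\<bar>pp k - qq k\<bar> * \<bar>pp k - qq k\<bar> \<le> \<bar>pp k - qq k\<bar>" using a by (intro mult_right_le_one_le) auto
  hence b: "(pp k - qq k)^2 \<le> \<bar>pp k - qq k\<bar>" by (metis abs_mult_self_eq power2_eq_square)
  have "s * (pp k - qq k)^2 \<le> (pp k - qq k)^2" using assms by (simp add: mult_left_le_one_le)
  then show ?thesis unfolding gf_def using b pp_range[of k] qq_range[of k] by linarith
qed

lemma Phi_cont: "continuous_on {0..1} Phi"
proof (rule lipschitz_on_continuous_on)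
  show "(pi^2)-lipschitz_on {0..1} Phi"
  proof (rule lipschitz_onI)
    fix x y :: real assume xy: "x \<in> {0..1}" "y \<in> {0..1}"
    show "dist (Phi x) (Phi y) \<le> pi^2 * dist x y"
    proof (cases "x \<le> y")
      case True
      from Phi_mono_lip[of x y] True xy show ?thesis by (simp add: dist_real_def)
    next
      case False
      from Phi_mono_lip[of y x] False xy show ?thesis by (simp add: dist_real_def)
    qed
  qed simp
qed

lemma Fr_cont: "continuous_on {0<..1} (Fr \<beta> J)"
  unfolding Fr_def[abs_def]
  by (intro continuous_intros continuous_on_subset[OF Phi_cont]) auto

lemma Fr_strict:
  assumes "0 < s" "s < s'" "s' \<le> 1"
  shows "Fr \<beta> J s < Fr \<beta> J s'"
proof -
  have K: "0 < (2*pi)^2" by simp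
  have "ln s < ln s'" using assms by simp
  hence a: "ln s * (2*pi)^2 < ln s' * (2*pi)^2" using K by (intro mult_strict_right_mono)
  have b: "Phi s \<le> Phi s'" using Phi_mono_lip(1)[of s s'] assms by simp
  have "ln s * (2*pi)^2 + Phi s < ln s' * (2*pi)^2 + Phi s'" using a b by linarith
  from divide_strict_right_mono[OF this K]
  have "(ln s * (2*pi)^2 + Phi s) / (2*pi)^2 < (ln s' * (2*pi)^2 + Phi s') / (2*pi)^2" .
  then show ?thesis unfolding Fr_def by simp
qed

lemma sin2_shift: "sin (2 * (\<theta> + pi/2)) = - sin (2*\<theta>)"
proof -
  have "2 * (\<theta> + pi/2) = 2*\<theta> + pi" by (simp add: algebra_simps)
  then show ?thesis by (simp add: sin_periodic_pi)
qed

lemma sin2_sym: "sin (2 * (pi/2 - \<theta>)) = sin (2*\<theta>)"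
proof -
  have "2 * (pi/2 - \<theta>) = pi - 2*\<theta>" by (simp add: algebra_simps)
  then show ?thesis by simp
qed

lemma sin2_zero_iff:
  assumes "0 \<le> \<theta>" "\<theta> < 2*pi"
  shows "sin (2*\<theta>) = 0 \<longleftrightarrow> \<theta> \<in> {0, pi/2, pi, 3*pi/2}"
proof
  assume "sin (2*\<theta>) = 0"
  then obtain i :: int where i: "2*\<theta> = of_int i * pi" by (auto simp: sin_zero_iff_int2)
  have "0 \<le> of_int i * pi" using i assms by linarith
  hence "0 \<le> i" using pi_gt_zero by (auto simp: zero_le_mult_iff)
  have "of_int i * pi < 4 * pi" using i assms by linarith
  hence "i < 4" by simp
  with \<open>0 \<le> i\<close> have "i = 0 \<or> i = 1 \<or> i = 2 \<or> i = 3" by auto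
  then show "\<theta> \<in> {0, pi/2, pi, 3*pi/2}" using i by auto
next
  assume "\<theta> \<in> {0, pi/2, pi, 3*pi/2}"
  then show "sin (2*\<theta>) = 0"
  proof (elim insertE)
    assume "\<theta> = 3*pi/2"
    then have "2*\<theta> = of_int 3 * pi" by simp
    then show ?thesis by (simp only: sin_zero_iff_int2) blast
  next
    assume "\<theta> = pi/2" then have "2*\<theta> = pi" by simp
    then show ?thesis by simp
  next
    assume "\<theta> = pi" then show ?thesis by simp
  next
    assume "\<theta> = 0" then show ?thesis by simp
  next
    assume "\<theta> \<in> {}" then show ?thesis by simp
  qed
qed

theorem proposition4p2:
  fixes \<beta> J :: real
  assumes "\<beta> > 0" and "J > 0"
  shows "(\<forall>k1 \<in> {-pi..pi}. \<forall>k2 \<in> {-pi..pi}. \<forall>\<theta> \<in> {0..2*pi}.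
            Im (det (Mmat (k1, k2) \<theta>)) = 0 \<and>
            (sin (2*\<theta>))^2 * (sin k1)^2 * (sin k2)^2 \<le> Re (det (Mmat (k1, k2) \<theta>)) \<and>
            Re (det (Mmat (k1, k2) \<theta>)) \<le> 16 * (sin (2*\<theta>))^2)
       \<and> (\<forall>\<theta>. sin (2*\<theta>) \<noteq> 0 \<longrightarrow> \<bar>Ffree \<beta> J \<theta>\<bar> \<noteq> \<infinity>)
       \<and> (\<forall>\<theta>. Ffree \<beta> J (\<theta> + pi/2) = Ffree \<beta> J \<theta>)
       \<and> (\<forall>\<theta>. Ffree \<beta> J \<theta> = Ffree \<beta> J (pi/2 - \<theta>))
       \<and> continuous_on {0<..<pi/2} (Ffree \<beta> J)
       \<and> strict_mono_on {0<..<pi/4} (Ffree \<beta> J)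
       \<and> strict_antimono_on {pi/4<..<pi/2} (Ffree \<beta> J)
       \<and> (INF \<theta>. Ffree \<beta> J \<theta>) = - \<infinity>
       \<and> (\<forall>\<theta> \<in> {0..<2*pi}. Ffree \<beta> J \<theta> = - \<infinity> \<longleftrightarrow> \<theta> \<in> {0, pi/2, pi, 3*pi/2})"
proof (intro conjI)
  show "\<forall>k1 \<in> {-pi..pi}. \<forall>k2 \<in> {-pi..pi}. \<forall>\<theta> \<in> {0..2*pi}.
            Im (det (Mmat (k1, k2) \<theta>)) = 0 \<and>
            (sin (2*\<theta>))^2 * (sin k1)^2 * (sin k2)^2 \<le> Re (det (Mmat (k1, k2) \<theta>)) \<and>
            Re (det (Mmat (k1, k2) \<theta>)) \<le> 16 * (sin (2*\<theta>))^2"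
  proof (intro ballI conjI)
    fix k1 k2 \<theta> :: real
    define S where "S = (sin (2*\<theta>))^2"
    have S01: "0 \<le> S" "S \<le> 1" unfolding S_def by (simp_all add: sin_sq_le1)
    have d: "det (Mmat (k1, k2) \<theta>) = of_real (S * gf S (k1,k2))" unfolding S_def by (rule det_gf)
    show "Im (det (Mmat (k1, k2) \<theta>)) = 0" unfolding d by simp
    have "pp (k1,k2) * qq (k1,k2) \<le> pp (k1,k2)" using pp_range[of "(k1,k2)"] qq_range[of "(k1,k2)"] by (intro mult_right_le_one_le) auto
    also have "\<dots> \<le> gf S (k1,k2)" using gf_ge[OF S01(1), of "(k1,k2)"] qq_range[of "(k1,k2)"] pp_range[of "(k1,k2)"] by linarith
    finally have "S * (pp (k1,k2) * qq (k1,k2)) \<le> S * gf S (k1,k2)" using S01 by (intro mult_left_mono) auto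
    then show "(sin (2*\<theta>))^2 * (sin k1)^2 * (sin k2)^2 \<le> Re (det (Mmat (k1, k2) \<theta>))"
      unfolding d by (simp add: S_def pp_def qq_def mult.assoc)
    have "S * gf S (k1,k2) \<le> S * 16" using gf_le16[OF S01] S01 by (intro mult_left_mono) auto
    then show "Re (det (Mmat (k1, k2) \<theta>)) \<le> 16 * (sin (2*\<theta>))^2"
      unfolding d by (simp add: S_def mult.commute)
  qed
  show "\<forall>\<theta>. sin (2*\<theta>) \<noteq> 0 \<longrightarrow> \<bar>Ffree \<beta> J \<theta>\<bar> \<noteq> \<infinity>"
    by (simp add: Ffree_eq)
  show "\<forall>\<theta>. Ffree \<beta> J (\<theta> + pi/2) = Ffree \<beta> J \<theta>"
    by (simp add: Ffree_eq sin2_shift)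
  show "\<forall>\<theta>. Ffree \<beta> J \<theta> = Ffree \<beta> J (pi/2 - \<theta>)"
    by (simp add: Ffree_eq sin2_sym)
  have pos: "0 < sin (2*\<theta>)" if "\<theta> \<in> {0<..<pi/2}" for \<theta>
    using that by (intro sin_gt_zero) auto
  show "continuous_on {0<..<pi/2} (Ffree \<beta> J)"
  proof -
    have "continuous_on {0<..<pi/2} (\<lambda>\<theta>. ereal (Fr \<beta> J ((sin (2*\<theta>))^2)))"
    proof (intro continuous_on_ereal continuous_on_compose2[OF Fr_cont])
      show "continuous_on {0<..<pi/2} (\<lambda>\<theta>. (sin (2*\<theta>))^2)" by (intro continuous_intros)
      show "(\<lambda>\<theta>. (sin (2*\<theta>))^2) ` {0<..<pi/2} \<subseteq> {0<..1}"
      proof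
        fix y assume "y \<in> (\<lambda>\<theta>. (sin (2*\<theta>))^2) ` {0<..<pi/2}"
        then obtain \<theta> where h: "\<theta> \<in> {0<..<pi/2}" and y: "y = (sin (2*\<theta>))^2" by blast
        have "0 < sin (2*\<theta>)" by (rule pos[OF h])
        then show "y \<in> {0<..1}" using y by (simp add: sin_sq_le1)
      qed
    qed
    moreover have eq: "\<And>\<theta>. \<theta> \<in> {0<..<pi/2} \<Longrightarrow> Ffree \<beta> J \<theta> = ereal (Fr \<beta> J ((sin (2*\<theta>))^2))"
    proof -
      fix \<theta> :: real assume h: "\<theta> \<in> {0<..<pi/2}"
      have "sin (2*\<theta>) \<noteq> 0" using pos[OF h] by simp
      then show "Ffree \<beta> J \<theta> = ereal (Fr \<beta> J ((sin (2*\<theta>))^2))" by (simp add: Ffree_eq)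
    qed
    moreover have "continuous_on {0<..<pi/2} (Ffree \<beta> J) = continuous_on {0<..<pi/2} (\<lambda>\<theta>. ereal (Fr \<beta> J ((sin (2*\<theta>))^2)))"
      by (rule continuous_on_cong[OF refl]) (rule eq)
    ultimately show ?thesis by simp
  qed
  show "strict_mono_on {0<..<pi/4} (Ffree \<beta> J)"
  proof (rule strict_mono_onI)
    fix r s :: real assume rs: "r \<in> {0<..<pi/4}" "s \<in> {0<..<pi/4}" "r < s"
    have pr: "0 < sin (2*r)" "0 < sin (2 * s)" using pos rs by auto
    have "sin (2*r) < sin (2 * s)" using rs by (intro sin_monotone_2pi) auto
    hence "(sin (2*r))^2 < (sin (2 * s))^2" using pr by (intro power_strict_mono) auto
    hence "Fr \<beta> J ((sin (2*r))^2) < Fr \<beta> J ((sin (2 * s))^2)"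
      using pr by (intro Fr_strict) (auto simp: sin_sq_le1)
    then show "Ffree \<beta> J r < Ffree \<beta> J s" using pr by (simp add: Ffree_eq)
  qed
  show "strict_antimono_on {pi/4<..<pi/2} (Ffree \<beta> J)"
  proof (rule monotone_onI)
    fix r s :: real assume rs: "r \<in> {pi/4<..<pi/2}" "s \<in> {pi/4<..<pi/2}" "r < s"
    have pr: "0 < sin (2*r)" "0 < sin (2 * s)" using pos rs by auto
    have "sin (pi - 2 * s) < sin (pi - 2*r)" using rs by (intro sin_monotone_2pi) auto
    hence "sin (2 * s) < sin (2*r)" by simp
    hence "(sin (2 * s))^2 < (sin (2*r))^2" using pr by (intro power_strict_mono) auto
    hence "Fr \<beta> J ((sin (2 * s))^2) < Fr \<beta> J ((sin (2*r))^2)"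
      using pr by (intro Fr_strict) (auto simp: sin_sq_le1)
    then show "Ffree \<beta> J s < Ffree \<beta> J r" using pr by (simp add: Ffree_eq)
  qed
  show "(INF \<theta>. Ffree \<beta> J \<theta>) = - \<infinity>"
  proof -
    have "(INF \<theta>. Ffree \<beta> J \<theta>) \<le> Ffree \<beta> J 0" by (rule INF_lower) simp
    also have "Ffree \<beta> J 0 = - \<infinity>" by (simp add: Ffree_eq)
    finally show ?thesis by simp
  qed
  show "\<forall>\<theta> \<in> {0..<2*pi}. Ffree \<beta> J \<theta> = - \<infinity> \<longleftrightarrow> \<theta> \<in> {0, pi/2, pi, 3*pi/2}"
  proof
    fix \<theta> assume t: "\<theta> \<in> {0..<2*pi}"
    have "Ffree \<beta> J \<theta> = - \<infinity> \<longleftrightarrow> sin (2*\<theta>) = 0" by (simp add: Ffree_eq)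
    also have "\<dots> \<longleftrightarrow> \<theta> \<in> {0, pi/2, pi, 3*pi/2}" using t by (intro sin2_zero_iff) auto
    finally show "Ffree \<beta> J \<theta> = - \<infinity> \<longleftrightarrow> \<theta> \<in> {0, pi/2, pi, 3*pi/2}" .
  qed
qed

end
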